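(* Comprehension $\sqsubseteq$ is a preorder (reflexive and transitive relation) on the set of splitting maps on a finite-dimensional Hilbert space $\mathcal H$.
   Context: A splitting map on $\mathcal H$ is an isometry $\chi:\mathcal H\to\mathcal H_L^\chi\otimes\mathcal H_R^\chi$ for some finite-dimensional Hilbert spaces $\mathcal H_L^\chi,\mathcal H_R^\chi$. For splitting maps $\zeta,\chi$ on $\mathcal H$, $\zeta\sqsubseteq\chi$ ($\zeta$ is comprehended in $\chi$) if there exist a Hilbert space $\mathcal H_M$ and isometries $\bullet:\mathcal H_R^\zeta\to\mathcal H_M\otimes\mathcal H_R^\chi$ and $\circ:\mathcal H_L^\chi\to\mathcal H_L^\zeta\otimes\mathcal H_M$ such that $(\mathbb 1_{\mathcal H_L^\zeta}\otimes\bullet)\zeta=(\circ\otimes\mathbb 1_{\mathcal H_R^\chi})\chi$ as maps $\mathcal H\to\mathcal H_L^\zeta\otimes\mathcal H_M\otimes\mathcal H_R^\chi$. *)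

theory Defs
  imports Complex_Main "Jordan_Normal_Form.Matrix"
begin

text \<open>A finite-dimensional Hilbert space is modelled (up to unitary isomorphism) as
  C^n with its standard inner product; linear maps are complex matrices.
  Tensor products C^a (x) C^b = C^(a*b) via the Kronecker product
  (basis e_i (x) e_j corresponds to index i*b + j).\<close>

definition cadj :: "complex mat \<Rightarrow> complex mat" where
  "cadj A = mat (dim_col A) (dim_row A) (\<lambda>(i,j). cnj (A $$ (j,i)))"

definition kron :: "complex mat \<Rightarrow> complex mat \<Rightarrow> complex mat" where
  "kron A B = mat (dim_row A * dim_row B) (dim_col A * dim_col B)
     (\<lambda>(i,j). A $$ (i div dim_row B, j div dim_col B) * B $$ (i mod dim_row B, j mod dim_col B))"

definition isometry :: "nat \<Rightarrow> nat \<Rightarrow> complex mat \<Rightarrow> bool" where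
  "isometry n m V \<longleftrightarrow> V \<in> carrier_mat m n \<and> cadj V * V = 1\<^sub>m n"

text \<open>A splitting map on C^n: a triple (dL, dR, V) with V : C^n -> C^dL (x) C^dR an isometry.\<close>
type_synonym splitting = "nat \<times> nat \<times> complex mat"

definition splitting_map :: "nat \<Rightarrow> splitting \<Rightarrow> bool" where
  "splitting_map n s \<longleftrightarrow> (case s of (dL, dR, V) \<Rightarrow> isometry n (dL * dR) V)"

definition splitting_maps :: "nat \<Rightarrow> splitting set" where
  "splitting_maps n = {s. splitting_map n s}"

definition comprehended :: "splitting \<Rightarrow> splitting \<Rightarrow> bool" where
  "comprehended \<zeta> \<chi> \<longleftrightarrow> (case \<zeta> of (zL, zR, Z) \<Rightarrow> case \<chi> of (xL, xR, X) \<Rightarrow>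
     (\<exists>dM bul cir. isometry zR (dM * xR) bul \<and> isometry xL (zL * dM) cir \<and>
        kron (1\<^sub>m zL) bul * Z = kron cir (1\<^sub>m xR) * X))"

definition comprehension_rel :: "nat \<Rightarrow> (splitting \<times> splitting) set" where
  "comprehension_rel n = {(\<zeta>, \<chi>). \<zeta> \<in> splitting_maps n \<and> \<chi> \<in> splitting_maps n \<and> comprehended \<zeta> \<chi>}"

end

theory Submission
  imports Defs
begin

lemma sum_split_prod: "(\<Sum>k<p*q. f k) = (\<Sum>i<p. \<Sum>j<q. f (i*q+j::nat))"
proof -
  have "(\<Sum>k<p*q. f k) = (\<Sum>i<p. sum f {i*q..<i*q+q})" by (rule sum.nat_group[symmetric])
  also have "\<dots> = (\<Sum>i<p. \<Sum>j<q. f (i*q+j))"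
  proof (rule sum.cong[OF refl])
    fix i
    have "sum f {i*q..<i*q+q} = sum f {0+i*q..<q+i*q}" by (simp only: add_0 add.commute)
    also have "\<dots> = (\<Sum>j=0..<q. f (j+i*q))" by (rule sum.shift_bounds_nat_ivl)
    also have "\<dots> = (\<Sum>j<q. f (i*q+j))" by (simp only: atLeast0LessThan add.commute)
    finally show "sum f {i*q..<i*q+q} = (\<Sum>j<q. f (i*q+j))" .
  qed
  finally show ?thesis .
qed

lemma kron_dims[simp]: "dim_row (kron A B) = dim_row A * dim_row B"
  "dim_col (kron A B) = dim_col A * dim_col B"
  by (simp_all add: kron_def)

lemma kron_carrier: "A \<in> carrier_mat a b \<Longrightarrow> B \<in> carrier_mat c d \<Longrightarrow> kron A B \<in> carrier_mat (a*c) (b*d)"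
  by (intro carrier_matI) (simp_all only: kron_dims carrier_matD)

lemma kron_index: "i < dim_row A * dim_row B \<Longrightarrow> j < dim_col A * dim_col B \<Longrightarrow>
  kron A B $$ (i,j) = A $$ (i div dim_row B, j div dim_col B) * B $$ (i mod dim_row B, j mod dim_col B)"
  by (simp add: kron_def)

lemma cadj_dims[simp]: "dim_row (cadj A) = dim_col A" "dim_col (cadj A) = dim_row A"
  by (simp_all add: cadj_def)

lemma cadj_carrier: "A \<in> carrier_mat a b \<Longrightarrow> cadj A \<in> carrier_mat b a"
  by (intro carrier_matI) (simp_all only: cadj_dims carrier_matD)

lemma cadj_index: "i < dim_col A \<Longrightarrow> j < dim_row A \<Longrightarrow> cadj A $$ (i,j) = cnj (A $$ (j,i))"
  by (simp add: cadj_def)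

lemma cadj_one[simp]: "cadj (1\<^sub>m n) = 1\<^sub>m n"
  by (rule eq_matI) (auto simp: cadj_def)

lemma cadj_mult: "A \<in> carrier_mat a b \<Longrightarrow> B \<in> carrier_mat b c \<Longrightarrow> cadj (A * B) = cadj B * cadj A"
  by (rule eq_matI) (auto simp: cadj_def scalar_prod_def mult.commute intro!: sum.cong)

lemma mod_less_mult: "i < a * b \<Longrightarrow> i mod b < (b::nat)"
  by (cases b) auto

lemma cadj_kron: "cadj (kron A B) = kron (cadj A) (cadj B)"
proof (rule eq_matI)
  fix i j assume i: "i < dim_row (kron (cadj A) (cadj B))" and j: "j < dim_col (kron (cadj A) (cadj B))"
  have i': "i < dim_col A * dim_col B" and j': "j < dim_row A * dim_row B" using i j by auto
  have m: "i mod dim_col B < dim_col B" "j mod dim_row B < dim_row B"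
    using mod_less_mult[OF i'] mod_less_mult[OF j'] .
  have d: "i div dim_col B < dim_col A" "j div dim_row B < dim_row A"
    using i' j' by (simp_all add: less_mult_imp_div_less)
  have "cadj (kron A B) $$ (i,j) = cnj (kron A B $$ (j,i))"
    by (rule cadj_index) (use i' j' in simp_all)
  also have "\<dots> = cnj (A $$ (j div dim_row B, i div dim_col B) * B $$ (j mod dim_row B, i mod dim_col B))"
    by (subst kron_index) (use i' j' in simp_all)
  also have "\<dots> = kron (cadj A) (cadj B) $$ (i,j)"
    apply (subst kron_index) 
    using i' j' apply simp_all
    apply (subst cadj_index, use d m in simp_all)+
    done
  finally show "cadj (kron A B) $$ (i,j) = kron (cadj A) (cadj B) $$ (i,j)" .
qed simp_all

lemma kron_mult:
  assumes "A \<in> carrier_mat a b" "B \<in> carrier_mat c d" "C \<in> carrier_mat b e" "D \<in> carrier_mat d f"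
  shows "kron A B * kron C D = kron (A*C) (B*D)"
proof (rule eq_matI)
  fix i j assume i: "i < dim_row (kron (A*C) (B*D))" and j: "j < dim_col (kron (A*C) (B*D))"
  have i': "i < a*c" and j': "j < e*f" using i j assms by auto
  have c0: "c > 0" and f0: "f > 0" using i' j' by (auto intro!: gr0I)
  have id: "i div c < a" "j div f < e" "i mod c < c" "j mod f < f"
    using i' j' c0 f0 by (auto simp: less_mult_imp_div_less)
  have "(kron A B * kron C D) $$ (i,j) = (\<Sum>k<b*d. kron A B $$ (i,k) * kron C D $$ (k,j))"
    using i' j' assms by (simp add: scalar_prod_def lessThan_atLeast0 kron_def)
  also have "\<dots> = (\<Sum>x<b. \<Sum>y<d. kron A B $$ (i,x*d+y) * kron C D $$ (x*d+y,j))"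
    by (rule sum_split_prod)
  also have "\<dots> = (\<Sum>x<b. \<Sum>y<d. (A $$ (i div c, x) * C $$ (x, j div f)) * (B $$ (i mod c, y) * D $$ (y, j mod f)))"
  proof (intro sum.cong refl)
    fix x y assume x: "x \<in> {..<b}" and y: "y \<in> {..<d}"
    have "x*d+y < Suc x * d" using y by simp
    also have "\<dots> \<le> b*d" using x by (intro mult_le_mono1) simp
    finally have "x*d+y < b*d" .
    then show "kron A B $$ (i,x*d+y) * kron C D $$ (x*d+y,j) =
      (A $$ (i div c, x) * C $$ (x, j div f)) * (B $$ (i mod c, y) * D $$ (y, j mod f))"
      using i' j' assms y by (simp add: kron_index)
  qed
  also have "\<dots> = (\<Sum>x<b. A $$ (i div c, x) * C $$ (x, j div f)) * (\<Sum>y<d. B $$ (i mod c, y) * D $$ (y, j mod f))"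
    by (simp add: sum_product)
  also have "\<dots> = kron (A*C) (B*D) $$ (i,j)"
    using i' j' assms id by (simp add: kron_def scalar_prod_def lessThan_atLeast0)
  finally show "(kron A B * kron C D) $$ (i,j) = kron (A*C) (B*D) $$ (i,j)" .
next
  show "dim_row (kron A B * kron C D) = dim_row (kron (A*C) (B*D))" by simp
next
  show "dim_col (kron A B * kron C D) = dim_col (kron (A*C) (B*D))" by simp
qed

lemma kron_assoc: "kron (kron A B) C = kron A (kron B C)"
proof (rule eq_matI)
  fix i j assume i: "i < dim_row (kron A (kron B C))" and j: "j < dim_col (kron A (kron B C))"
  let ?a = "dim_row A" and ?b = "dim_row B" and ?c = "dim_row C"
  let ?a' = "dim_col A" and ?b' = "dim_col B" and ?c' = "dim_col C"
  have i': "i < ?a * (?b * ?c)" and j': "j < ?a' * (?b' * ?c')" using i j by auto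
  have c0: "?c > 0" "?b > 0" "?c' > 0" "?b' > 0" using i' j' by (auto intro!: gr0I)
  have cb: "?b * ?c = ?c * ?b" "?b' * ?c' = ?c' * ?b'" by (rule mult.commute)+
  have r1: "i div ?c div ?b = i div (?b * ?c)" unfolding cb by (rule div_mult2_eq[symmetric])
  have e1: "i mod (?b * ?c) = ?c * (i div ?c mod ?b) + i mod ?c"
    unfolding cb by (rule mod_mult2_eq)
  have r2: "i div ?c mod ?b = i mod (?b * ?c) div ?c" using c0 unfolding e1 by simp
  have r3: "i mod ?c = i mod (?b * ?c) mod ?c" using c0 unfolding e1 by simp
  have s1: "j div ?c' div ?b' = j div (?b' * ?c')" unfolding cb by (rule div_mult2_eq[symmetric])
  have e2: "j mod (?b' * ?c') = ?c' * (j div ?c' mod ?b') + j mod ?c'"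
    unfolding cb by (rule mod_mult2_eq)
  have s2: "j div ?c' mod ?b' = j mod (?b' * ?c') div ?c'" using c0 unfolding e2 by simp
  have s3: "j mod ?c' = j mod (?b' * ?c') mod ?c'" using c0 unfolding e2 by simp
  have b1: "i div ?c < ?a * ?b" "j div ?c' < ?a' * ?b'" using i' j'
    by (auto simp: less_mult_imp_div_less mult.assoc)
  have b2: "i mod (?b * ?c) < ?b * ?c" "j mod (?b' * ?c') < ?b' * ?c'" using c0 by auto
  have b3: "i < ?a * ?b * ?c" "j < ?a' * ?b' * ?c'" using i' j' by (simp_all add: mult.assoc)
  have L: "kron (kron A B) C $$ (i,j) = A $$ (i div ?c div ?b, j div ?c' div ?b') *
      B $$ (i div ?c mod ?b, j div ?c' mod ?b') * C $$ (i mod ?c, j mod ?c')"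
    using b1 b3 by (simp add: kron_index)
  have R: "kron A (kron B C) $$ (i,j) = A $$ (i div (?b * ?c), j div (?b' * ?c')) *
      (B $$ (i mod (?b * ?c) div ?c, j mod (?b' * ?c') div ?c') *
       C $$ (i mod (?b * ?c) mod ?c, j mod (?b' * ?c') mod ?c'))"
    using b2 i' j' by (simp add: kron_index)
  show "kron (kron A B) C $$ (i,j) = kron A (kron B C) $$ (i,j)"
    unfolding L R r1 r2 r3 s1 s2 s3 by (simp only: mult.assoc)
qed auto

lemma kron_one: "kron (1\<^sub>m a) (1\<^sub>m b) = 1\<^sub>m (a*b)"
proof (rule eq_matI)
  fix i j assume i: "i < dim_row (1\<^sub>m (a*b))" and j: "j < dim_col (1\<^sub>m (a*b))"
  then have "i < a*b" "j < a*b" by auto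
  moreover then have "b > 0" by (auto intro!: gr0I)
  moreover have "(i div b = j div b \<and> i mod b = j mod b) = (i = j)"
  proof
    assume h: "i div b = j div b \<and> i mod b = j mod b"
    have "i = i div b * b + i mod b" by (rule div_mult_mod_eq[symmetric])
    also have "\<dots> = j div b * b + j mod b" using h by simp
    also have "\<dots> = j" by (rule div_mult_mod_eq)
    finally show "i = j" .
  qed simp
  ultimately show "kron (1\<^sub>m a) (1\<^sub>m b) $$ (i,j) = 1\<^sub>m (a*b) $$ (i,j)"
    by (auto simp: kron_index less_mult_imp_div_less)
qed auto

lemma isometry_comp: "isometry n m V \<Longrightarrow> isometry m k W \<Longrightarrow> isometry n k (W * V)"
  unfolding isometry_def
proof (elim conjE, intro conjI)
  assume V: "V \<in> carrier_mat m n" and W: "W \<in> carrier_mat k m"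
    and v: "cadj V * V = 1\<^sub>m n" and w: "cadj W * W = 1\<^sub>m m"
  show "W * V \<in> carrier_mat k n" using V W by auto
  have cV: "cadj V \<in> carrier_mat n m" and cW: "cadj W \<in> carrier_mat m k"
    using V W by (auto intro: cadj_carrier)
  have "cadj (W*V) * (W*V) = (cadj V * cadj W) * (W*V)"
    using V W by (simp add: cadj_mult)
  also have "\<dots> = cadj V * (cadj W * (W*V))"
    by (rule assoc_mult_mat[OF cV cW mult_carrier_mat[OF W V]])
  also have "cadj W * (W*V) = (cadj W * W) * V"
    by (rule assoc_mult_mat[OF cW W V, symmetric])
  also have "\<dots> = V" using w V by simp
  also note v
  finally show "cadj (W*V) * (W*V) = 1\<^sub>m n" .
qed

lemma isometry_kron_left: "isometry n m V \<Longrightarrow> isometry (a*n) (a*m) (kron (1\<^sub>m a) V)"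
  unfolding isometry_def
proof (elim conjE, intro conjI)
  assume V: "V \<in> carrier_mat m n" and v: "cadj V * V = 1\<^sub>m n"
  show "kron (1\<^sub>m a) V \<in> carrier_mat (a*m) (a*n)" using V by (simp add: kron_carrier)
  have "cadj (kron (1\<^sub>m a) V) * kron (1\<^sub>m a) V = kron (1\<^sub>m a * 1\<^sub>m a) (cadj V * V)"
    unfolding cadj_kron cadj_one
    by (rule kron_mult[of "1\<^sub>m a" a a "cadj V" n m "1\<^sub>m a" a V n]) (use V in \<open>auto intro: cadj_carrier\<close>)
  also have "\<dots> = 1\<^sub>m (a*n)" using v by (simp add: kron_one)
  finally show "cadj (kron (1\<^sub>m a) V) * kron (1\<^sub>m a) V = 1\<^sub>m (a*n)" .
qed

lemma isometry_kron_right: "isometry n m V \<Longrightarrow> isometry (n*a) (m*a) (kron V (1\<^sub>m a))"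
  unfolding isometry_def
proof (elim conjE, intro conjI)
  assume V: "V \<in> carrier_mat m n" and v: "cadj V * V = 1\<^sub>m n"
  show "kron V (1\<^sub>m a) \<in> carrier_mat (m*a) (n*a)" using V by (simp add: kron_carrier)
  have "cadj (kron V (1\<^sub>m a)) * kron V (1\<^sub>m a) = kron (cadj V * V) (1\<^sub>m a * 1\<^sub>m a)"
    unfolding cadj_kron cadj_one
    by (rule kron_mult[of "cadj V" n m "1\<^sub>m a" a a V n "1\<^sub>m a" a]) (use V in \<open>auto intro: cadj_carrier\<close>)
  also have "\<dots> = 1\<^sub>m (n*a)" using v by (simp add: kron_one)
  finally show "cadj (kron V (1\<^sub>m a)) * kron V (1\<^sub>m a) = 1\<^sub>m (n*a)" .
qed

lemma isometry_one: "isometry n n (1\<^sub>m n)"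
  by (simp add: isometry_def)

lemma comp_refl: "comprehended (zL, zR, Z) (zL, zR, Z)"
  unfolding comprehended_def
proof (simp only: prod.case, intro exI conjI)
  show "isometry zR (1 * zR) (1\<^sub>m zR)" using isometry_one by simp
  show "isometry zL (zL * 1) (1\<^sub>m zL)" using isometry_one by simp
  show "kron (1\<^sub>m zL) (1\<^sub>m zR) * Z = kron (1\<^sub>m zL) (1\<^sub>m zR) * Z" ..
qed

lemma kron_one_carrier: "1\<^sub>m a \<in> carrier_mat a a" by simp

lemma comp_trans_eq:
  assumes Z: "Z \<in> carrier_mat (zL*zR) n" and X: "X \<in> carrier_mat (xL*xR) n" and Y: "Y \<in> carrier_mat (yL*yR) n"
    and B1: "B1 \<in> carrier_mat (m1*xR) zR" and C1: "C1 \<in> carrier_mat (zL*m1) xL"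
    and B2: "B2 \<in> carrier_mat (m2*yR) xR" and C2: "C2 \<in> carrier_mat (xL*m2) yL"
    and e1: "kron (1\<^sub>m zL) B1 * Z = kron C1 (1\<^sub>m xR) * X"
    and e2: "kron (1\<^sub>m xL) B2 * X = kron C2 (1\<^sub>m yR) * Y"
  shows "kron (1\<^sub>m zL) (kron (1\<^sub>m m1) B2 * B1) * Z = kron (kron C1 (1\<^sub>m m2) * C2) (1\<^sub>m yR) * Y"
proof -
  have K2: "kron (1\<^sub>m m1) B2 \<in> carrier_mat (m1*(m2*yR)) (m1*xR)"
    by (rule kron_carrier[OF kron_one_carrier B2])
  have P: "kron (1\<^sub>m zL) (kron (1\<^sub>m m1) B2) \<in> carrier_mat (zL*(m1*(m2*yR))) (zL*(m1*xR))"
    by (rule kron_carrier[OF kron_one_carrier K2])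
  have Q: "kron (1\<^sub>m zL) B1 \<in> carrier_mat (zL*(m1*xR)) (zL*zR)"
    by (rule kron_carrier[OF kron_one_carrier B1])
  have R: "kron C1 (1\<^sub>m xR) \<in> carrier_mat (zL*m1*xR) (xL*xR)"
    by (rule kron_carrier[OF C1 kron_one_carrier])
  have R': "kron C1 (1\<^sub>m xR) \<in> carrier_mat (zL*(m1*xR)) (xL*xR)"
    using R by (simp only: mult.assoc)
  have T: "kron (1\<^sub>m xL) B2 \<in> carrier_mat (xL*(m2*yR)) (xL*xR)"
    by (rule kron_carrier[OF kron_one_carrier B2])
  have U: "kron C1 (1\<^sub>m (m2*yR)) \<in> carrier_mat (zL*m1*(m2*yR)) (xL*(m2*yR))"
    by (rule kron_carrier[OF C1 kron_one_carrier])
  have V: "kron C2 (1\<^sub>m yR) \<in> carrier_mat (xL*m2*yR) (yL*yR)"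
    by (rule kron_carrier[OF C2 kron_one_carrier])
  have V': "kron C2 (1\<^sub>m yR) \<in> carrier_mat (xL*(m2*yR)) (yL*yR)"
    using V by (simp only: mult.assoc)
  have s1: "kron (1\<^sub>m zL) (kron (1\<^sub>m m1) B2 * B1) = kron (1\<^sub>m zL) (kron (1\<^sub>m m1) B2) * kron (1\<^sub>m zL) B1"
    using kron_mult[OF kron_one_carrier K2 kron_one_carrier B1, of zL] by simp
  have s3: "kron (1\<^sub>m zL) (kron (1\<^sub>m m1) B2) = kron (1\<^sub>m (zL*m1)) B2"
    by (simp only: kron_assoc[symmetric] kron_one)
  have s4: "kron (1\<^sub>m (zL*m1)) B2 * kron C1 (1\<^sub>m xR) = kron C1 (1\<^sub>m (m2*yR)) * kron (1\<^sub>m xL) B2"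
  proof -
    have "kron (1\<^sub>m (zL*m1)) B2 * kron C1 (1\<^sub>m xR) = kron (1\<^sub>m (zL*m1) * C1) (B2 * 1\<^sub>m xR)"
      by (rule kron_mult[OF kron_one_carrier B2 C1 kron_one_carrier])
    also have "\<dots> = kron (C1 * 1\<^sub>m xL) (1\<^sub>m (m2*yR) * B2)" using B2 C1 by simp
    also have "\<dots> = kron C1 (1\<^sub>m (m2*yR)) * kron (1\<^sub>m xL) B2"
      by (rule kron_mult[OF C1 kron_one_carrier kron_one_carrier B2, symmetric])
    finally show ?thesis .
  qed
  have s6: "kron C1 (1\<^sub>m (m2*yR)) = kron (kron C1 (1\<^sub>m m2)) (1\<^sub>m yR)"
    by (simp only: kron_assoc kron_one)
  have s7: "kron (kron C1 (1\<^sub>m m2)) (1\<^sub>m yR) * kron C2 (1\<^sub>m yR) = kron (kron C1 (1\<^sub>m m2) * C2) (1\<^sub>m yR)"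
  proof -
    have K: "kron C1 (1\<^sub>m m2) \<in> carrier_mat (zL*m1*m2) (xL*m2)"
      by (rule kron_carrier[OF C1 kron_one_carrier])
    show ?thesis using kron_mult[OF K kron_one_carrier C2 kron_one_carrier, of yR] by simp
  qed
  have "kron (1\<^sub>m zL) (kron (1\<^sub>m m1) B2 * B1) * Z
      = kron (1\<^sub>m zL) (kron (1\<^sub>m m1) B2) * (kron (1\<^sub>m zL) B1 * Z)"
    unfolding s1 by (rule assoc_mult_mat[OF P Q Z])
  also have "\<dots> = kron (1\<^sub>m zL) (kron (1\<^sub>m m1) B2) * (kron C1 (1\<^sub>m xR) * X)"
    unfolding e1 ..
  also have "\<dots> = (kron (1\<^sub>m zL) (kron (1\<^sub>m m1) B2) * kron C1 (1\<^sub>m xR)) * X"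
    by (rule assoc_mult_mat[OF P R' X, symmetric])
  also have "\<dots> = (kron C1 (1\<^sub>m (m2*yR)) * kron (1\<^sub>m xL) B2) * X"
    unfolding s3 s4 ..
  also have "\<dots> = kron C1 (1\<^sub>m (m2*yR)) * (kron (1\<^sub>m xL) B2 * X)"
    by (rule assoc_mult_mat[OF U T X])
  also have "\<dots> = kron C1 (1\<^sub>m (m2*yR)) * (kron C2 (1\<^sub>m yR) * Y)"
    unfolding e2 ..
  also have "\<dots> = (kron C1 (1\<^sub>m (m2*yR)) * kron C2 (1\<^sub>m yR)) * Y"
    by (rule assoc_mult_mat[OF U V' Y, symmetric])
  also have "\<dots> = kron (kron C1 (1\<^sub>m m2) * C2) (1\<^sub>m yR) * Y"
    unfolding s6 s7 ..
  finally show ?thesis .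
qed

lemma comp_trans:
  assumes sz: "splitting_map n (zL, zR, Z)" and sx: "splitting_map n (xL, xR, X)"
    and sy: "splitting_map n (yL, yR, Y)"
    and h1: "comprehended (zL, zR, Z) (xL, xR, X)" and h2: "comprehended (xL, xR, X) (yL, yR, Y)"
  shows "comprehended (zL, zR, Z) (yL, yR, Y)"
proof -
  from h1 obtain m1 B1 C1 where b1: "isometry zR (m1 * xR) B1" and c1: "isometry xL (zL * m1) C1"
    and e1: "kron (1\<^sub>m zL) B1 * Z = kron C1 (1\<^sub>m xR) * X"
    unfolding comprehended_def by auto
  from h2 obtain m2 B2 C2 where b2: "isometry xR (m2 * yR) B2" and c2: "isometry yL (xL * m2) C2"
    and e2: "kron (1\<^sub>m xL) B2 * X = kron C2 (1\<^sub>m yR) * Y"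
    unfolding comprehended_def by auto
  have Z: "Z \<in> carrier_mat (zL*zR) n" using sz unfolding splitting_map_def isometry_def by simp
  have X: "X \<in> carrier_mat (xL*xR) n" using sx unfolding splitting_map_def isometry_def by simp
  have Y: "Y \<in> carrier_mat (yL*yR) n" using sy unfolding splitting_map_def isometry_def by simp
  have ib: "isometry zR ((m1 * m2) * yR) (kron (1\<^sub>m m1) B2 * B1)"
    using isometry_comp[OF b1 isometry_kron_left[OF b2, of m1]] by (simp only: mult.assoc)
  have ic: "isometry yL (zL * (m1 * m2)) (kron C1 (1\<^sub>m m2) * C2)"
    using isometry_comp[OF c2 isometry_kron_right[OF c1, of m2]] by (simp only: mult.assoc)
  have eq: "kron (1\<^sub>m zL) (kron (1\<^sub>m m1) B2 * B1) * Z = kron (kron C1 (1\<^sub>m m2) * C2) (1\<^sub>m yR) * Y"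
    by (rule comp_trans_eq[OF Z X Y _ _ _ _ e1 e2])
       (use b1 c1 b2 c2 in \<open>simp_all only: isometry_def\<close>)
  show ?thesis unfolding comprehended_def using ib ic eq by auto
qed

theorem mainTheorem6:
  fixes n :: nat
  shows "preorder_on (splitting_maps n) (comprehension_rel n)"
  unfolding preorder_on_def
proof (intro conjI)
  show "comprehension_rel n \<subseteq> splitting_maps n \<times> splitting_maps n"
    unfolding comprehension_rel_def by auto
  show "refl_on (splitting_maps n) (comprehension_rel n)"
  proof (rule refl_onI)
    fix x assume x: "x \<in> splitting_maps n"
    obtain zL zR Z where xe: "x = (zL, zR, Z)" by (cases x) auto
    show "(x, x) \<in> comprehension_rel n"
      unfolding comprehension_rel_def using x comp_refl[of zL zR Z] xe by simp
  qed
  show "trans (comprehension_rel n)"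
  proof (rule transI)
    fix x y z assume xy: "(x, y) \<in> comprehension_rel n" and yz: "(y, z) \<in> comprehension_rel n"
    obtain zL zR Z where xe: "x = (zL, zR, Z)" by (cases x) auto
    obtain xL xR X where ye: "y = (xL, xR, X)" by (cases y) auto
    obtain yL yR Y where ze: "z = (yL, yR, Y)" by (cases z) auto
    have sx: "splitting_map n x" "splitting_map n y" "splitting_map n z"
      using xy yz unfolding comprehension_rel_def splitting_maps_def by auto
    have h: "comprehended x y" "comprehended y z"
      using xy yz unfolding comprehension_rel_def by auto
    have "comprehended x z"
      using comp_trans[of n zL zR Z xL xR X yL yR Y] sx h unfolding xe ye ze by blast
    then show "(x, z) \<in> comprehension_rel n"
      using sx unfolding comprehension_rel_def splitting_maps_def by auto
  qed
qed

end
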